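(* Let $\Phi(v_1,\dots,v_r)$ be an $\mathrm{st}$-prenex formula all of whose parameters are standard. Then (in SPOT) for every standard set $S$ there is a standard set $P$ such that for all standard $v_1,\dots,v_r$: $$\langle v_1,\dots,v_r\rangle\in P\iff \langle v_1,\dots,v_r\rangle\in S\wedge\Phi(v_1,\dots,v_r).$$
   Context: We work in the theory SPOT. Its language is the $\in$-language (membership together with the usual defined symbols of mathematics such as $\mathbb N,\mathbb R,<,+,\cdot$) enriched by a unary predicate $\mathrm{st}$ ("$x$ is standard"). An $\in$-formula is a formula not mentioning $\mathrm{st}$. $\forall^{\mathrm{st}}x$ and $\exists^{\mathrm{st}}x$ denote quantifiers restricted to standard sets. The axioms of SPOT are: ZF; Transfer: for every $\in$-formula $\varphi(x)$ all of whose parameters are standard, $\forall^{\mathrm{st}}x\,\varphi(x)\to\forall x\,\varphi(x)$; Nontriviality: $\exists \nu\in\mathbb N\,\forall^{\mathrm{st}}n\in\mathbb N\,(n\neq\nu)$; Standard Part: $\forall A\subseteq\mathbb N\,\exists^{\mathrm{st}}B\subseteq\mathbb N\,\forall^{\mathrm{st}}n\in\mathbb N\,(n\in B\iff n\in A)$. An $\mathrm{st}$-prenex formula is one of the form $\mathsf Q^{\mathrm{st}}u_1\cdots\mathsf Q^{\mathrm{st}}u_s\,\psi(u_1,\dots,u_s,v_1,\dots,v_r)$ where $\psi$ is an $\in$-formula and each $\mathsf Q^{\mathrm{st}}$ is $\forall^{\mathrm{st}}$ or $\exists^{\mathrm{st}}$ (all quantifiers over standard sets precede all ordinary quantifiers).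 *)

theory Defs
  imports Main
begin

text \<open>Deep embedding of the language of SPOT: the \<in>-language (with equality)
  enriched by the unary predicate st. Variables are natural numbers; a model is a
  type 'a with a membership relation mem (mem x y means x \<in> y) and a predicate st.
  The usual defined symbols of mathematics are eliminable abbreviations, so
  \<in>-formulas are built from membership and equality only.\<close>

datatype form =
    FMem nat nat
  | FEq nat nat
  | FSt nat
  | FNeg form
  | FAnd form form
  | FEx nat form

primrec sat :: "('a \<Rightarrow> 'a \<Rightarrow> bool) \<Rightarrow> ('a \<Rightarrow> bool) \<Rightarrow> (nat \<Rightarrow> 'a) \<Rightarrow> form \<Rightarrow> bool" where
  "sat mem st e (FMem x y) = mem (e x) (e y)"
| "sat mem st e (FEq x y) = (e x = e y)"
| "sat mem st e (FSt x) = st (e x)"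
| "sat mem st e (FNeg p) = (\<not> sat mem st e p)"
| "sat mem st e (FAnd p q) = (sat mem st e p \<and> sat mem st e q)"
| "sat mem st e (FEx x p) = (\<exists>a. sat mem st (e(x := a)) p)"

primrec fv :: "form \<Rightarrow> nat set" where
  "fv (FMem x y) = {x, y}"
| "fv (FEq x y) = {x, y}"
| "fv (FSt x) = {x}"
| "fv (FNeg p) = fv p"
| "fv (FAnd p q) = fv p \<union> fv q"
| "fv (FEx x p) = fv p - {x}"

primrec in_form :: "form \<Rightarrow> bool" where
  "in_form (FMem x y) = True"
| "in_form (FEq x y) = True"
| "in_form (FSt x) = False"
| "in_form (FNeg p) = in_form p"
| "in_form (FAnd p q) = (in_form p \<and> in_form q)"
| "in_form (FEx x p) = in_form p"

text \<open>st-prenex formulas: a prefix of standard quantifiers (True = forall-st, False = exists-st,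
  together with the bound variable) followed by an \<in>-formula.\<close>
fun sat_pre :: "('a \<Rightarrow> 'a \<Rightarrow> bool) \<Rightarrow> ('a \<Rightarrow> bool) \<Rightarrow> (nat \<Rightarrow> 'a) \<Rightarrow> (bool \<times> nat) list \<Rightarrow> form \<Rightarrow> bool" where
  "sat_pre mem st e [] psi = sat mem st e psi"
| "sat_pre mem st e ((True, u) # qs) psi = (\<forall>a. st a \<longrightarrow> sat_pre mem st (e(u := a)) qs psi)"
| "sat_pre mem st e ((False, u) # qs) psi = (\<exists>a. st a \<and> sat_pre mem st (e(u := a)) qs psi)"

definition fv_pre :: "(bool \<times> nat) list \<Rightarrow> form \<Rightarrow> nat set" where
  "fv_pre qs psi = fv psi - set (map snd qs)"

definition is_empty :: "('a \<Rightarrow> 'a \<Rightarrow> bool) \<Rightarrow> 'a \<Rightarrow> bool" where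
  "is_empty mem e \<longleftrightarrow> (\<forall>x. \<not> mem x e)"

definition is_succ :: "('a \<Rightarrow> 'a \<Rightarrow> bool) \<Rightarrow> 'a \<Rightarrow> 'a \<Rightarrow> bool" where
  "is_succ mem s y \<longleftrightarrow> (\<forall>x. mem x s \<longleftrightarrow> mem x y \<or> x = y)"

definition is_inductive :: "('a \<Rightarrow> 'a \<Rightarrow> bool) \<Rightarrow> 'a \<Rightarrow> bool" where
  "is_inductive mem w \<longleftrightarrow>
     (\<exists>e. mem e w \<and> is_empty mem e) \<and> (\<forall>y. mem y w \<longrightarrow> (\<exists>s. mem s w \<and> is_succ mem s y))"

definition is_omega :: "('a \<Rightarrow> 'a \<Rightarrow> bool) \<Rightarrow> 'a \<Rightarrow> bool" where
  "is_omega mem w \<longleftrightarrow> is_inductive mem w \<and>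
     (\<forall>v. is_inductive mem v \<longrightarrow> (\<forall>x. mem x w \<longrightarrow> mem x v))"

definition subset_of :: "('a \<Rightarrow> 'a \<Rightarrow> bool) \<Rightarrow> 'a \<Rightarrow> 'a \<Rightarrow> bool" where
  "subset_of mem a b \<longleftrightarrow> (\<forall>x. mem x a \<longrightarrow> mem x b)"

definition is_pair :: "('a \<Rightarrow> 'a \<Rightarrow> bool) \<Rightarrow> 'a \<Rightarrow> 'a \<Rightarrow> 'a \<Rightarrow> bool" where
  "is_pair mem p a b \<longleftrightarrow>
     (\<forall>z. mem z p \<longleftrightarrow> ((\<forall>w. mem w z \<longleftrightarrow> w = a) \<or> (\<forall>w. mem w z \<longleftrightarrow> w = a \<or> w = b)))"

fun is_tuple :: "('a \<Rightarrow> 'a \<Rightarrow> bool) \<Rightarrow> 'a \<Rightarrow> 'a list \<Rightarrow> bool" where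
  "is_tuple mem t [] = False"
| "is_tuple mem t [a] = (t = a)"
| "is_tuple mem t (a # b # cs) = (\<exists>q. is_tuple mem q (b # cs) \<and> is_pair mem t a q)"

definition env_upd :: "(nat \<Rightarrow> 'a) \<Rightarrow> nat list \<Rightarrow> 'a list \<Rightarrow> nat \<Rightarrow> 'a" where
  "env_upd e vs vals = fold (\<lambda>(v, a) e'. e'(v := a)) (zip vs vals) e"

definition ZF :: "('a \<Rightarrow> 'a \<Rightarrow> bool) \<Rightarrow> bool" where
  "ZF mem \<longleftrightarrow>
     (\<forall>a b. (\<forall>x. mem x a \<longleftrightarrow> mem x b) \<longrightarrow> a = b) \<and>
     (\<forall>a. (\<exists>x. mem x a) \<longrightarrow> (\<exists>x. mem x a \<and> \<not> (\<exists>y. mem y x \<and> mem y a))) \<and>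
     (\<forall>a b. \<exists>c. mem a c \<and> mem b c) \<and>
     (\<forall>a. \<exists>u. \<forall>x y. mem x y \<and> mem y a \<longrightarrow> mem x u) \<and>
     (\<forall>a. \<exists>p. \<forall>z. subset_of mem z a \<longrightarrow> mem z p) \<and>
     (\<exists>w. is_inductive mem w) \<and>
     (\<forall>phi x e a. in_form phi \<longrightarrow>
        (\<exists>b. \<forall>z. mem z b \<longleftrightarrow> mem z a \<and> sat mem (\<lambda>_. False) (e(x := z)) phi)) \<and>
     (\<forall>phi x y e a. in_form phi \<longrightarrow> x \<noteq> y \<longrightarrow>
        (\<forall>z. mem z a \<longrightarrow> (\<exists>!w. sat mem (\<lambda>_. False) (e(x := z, y := w)) phi)) \<longrightarrow>
        (\<exists>b. \<forall>w. mem w b \<longleftrightarrow> (\<exists>z. mem z a \<and> sat mem (\<lambda>_. False) (e(x := z, y := w)) phi)))"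

definition Transfer :: "('a \<Rightarrow> 'a \<Rightarrow> bool) \<Rightarrow> ('a \<Rightarrow> bool) \<Rightarrow> bool" where
  "Transfer mem st \<longleftrightarrow>
     (\<forall>phi x e. in_form phi \<longrightarrow> (\<forall>y\<in>fv phi - {x}. st (e y)) \<longrightarrow>
        (\<forall>a. st a \<longrightarrow> sat mem st (e(x := a)) phi) \<longrightarrow> (\<forall>a. sat mem st (e(x := a)) phi))"

definition Nontriviality :: "('a \<Rightarrow> 'a \<Rightarrow> bool) \<Rightarrow> ('a \<Rightarrow> bool) \<Rightarrow> bool" where
  "Nontriviality mem st \<longleftrightarrow>
     (\<forall>w. is_omega mem w \<longrightarrow> (\<exists>\<nu>. mem \<nu> w \<and> (\<forall>n. st n \<and> mem n w \<longrightarrow> n \<noteq> \<nu>)))"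

definition Standard_Part :: "('a \<Rightarrow> 'a \<Rightarrow> bool) \<Rightarrow> ('a \<Rightarrow> bool) \<Rightarrow> bool" where
  "Standard_Part mem st \<longleftrightarrow>
     (\<forall>w. is_omega mem w \<longrightarrow>
        (\<forall>A. subset_of mem A w \<longrightarrow>
           (\<exists>B. st B \<and> subset_of mem B w \<and>
              (\<forall>n. st n \<and> mem n w \<longrightarrow> (mem n B \<longleftrightarrow> mem n A)))))"

definition SPOT :: "('a \<Rightarrow> 'a \<Rightarrow> bool) \<Rightarrow> ('a \<Rightarrow> bool) \<Rightarrow> bool" where
  "SPOT mem st \<longleftrightarrow> ZF mem \<and> Transfer mem st \<and> Nontriviality mem st \<and> Standard_Part mem st"

end

theory Submission
  imports Defs
begin

definition "FOr p q = FNeg (FAnd (FNeg p) (FNeg q))"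
definition "FAll x p = FNeg (FEx x (FNeg p))"
definition "FIff p q = FAnd (FOr (FNeg p) q) (FOr (FNeg q) p)"

lemma sat_FOr[simp]: "sat mem st e (FOr p q) = (sat mem st e p \<or> sat mem st e q)" by (simp add: FOr_def)
lemma sat_FAll[simp]: "sat mem st e (FAll x p) = (\<forall>a. sat mem st (e(x:=a)) p)" by (simp add: FAll_def)
lemma sat_FIff[simp]: "sat mem st e (FIff p q) = (sat mem st e p \<longleftrightarrow> sat mem st e q)" by (auto simp add: FIff_def)
lemma fv_FOr[simp]: "fv (FOr p q) = fv p \<union> fv q" by (simp add: FOr_def)
lemma fv_FAll[simp]: "fv (FAll x p) = fv p - {x}" by (simp add: FAll_def)
lemma fv_FIff[simp]: "fv (FIff p q) = fv p \<union> fv q" by (auto simp add: FIff_def)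
lemma in_form_FOr[simp]: "in_form (FOr p q) = (in_form p \<and> in_form q)" by (simp add: FOr_def)
lemma in_form_FAll[simp]: "in_form (FAll x p) = in_form p" by (simp add: FAll_def)
lemma in_form_FIff[simp]: "in_form (FIff p q) = (in_form p \<and> in_form q)" by (auto simp add: FIff_def)

lemma sat_cong: "\<forall>x\<in>fv p. e x = e' x \<Longrightarrow> sat mem st e p = sat mem st e' p"
proof (induction p arbitrary: e e')
  case (FAnd p q)
  then show ?case by (metis UnI1 UnI2 fv.simps(5) sat.simps(5))
next
  case (FEx x p)
  have "\<And>a. sat mem st (e(x:=a)) p = sat mem st (e'(x:=a)) p"
    using FEx by (intro FEx.IH) auto
  then show ?case by simp
qed auto

lemma sat_st: "in_form p \<Longrightarrow> sat mem st e p = sat mem st' e p"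
  by (induction p arbitrary: e) auto

lemma finite_fv: "finite (fv p)" by (induction p) auto

fun erase where
  "erase [] psi = psi"
| "erase ((True,u)#qs) psi = FAll u (erase qs psi)"
| "erase ((False,u)#qs) psi = FEx u (erase qs psi)"

lemma fv_erase: "fv (erase qs psi) = fv_pre qs psi"
  by (induction qs psi rule: erase.induct) (auto simp: fv_pre_def)

lemma in_form_erase: "in_form psi \<Longrightarrow> in_form (erase qs psi)"
  by (induction qs psi rule: erase.induct) auto

lemma erase_sat:
  assumes T: "Transfer mem st" and ip: "in_form psi"
  shows "\<forall>x\<in>fv_pre qs psi. st (e x) \<Longrightarrow> sat_pre mem st e qs psi = sat mem st e (erase qs psi)"
proof (induction qs arbitrary: e)
  case Nil then show ?case by simp
next
  case (Cons q qs)
  obtain b u where q: "q = (b,u)" by force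
  have IH: "\<And>a. st a \<Longrightarrow> sat_pre mem st (e(u:=a)) qs psi = sat mem st (e(u:=a)) (erase qs psi)"
  proof -
    fix a assume "st a"
    then have "\<forall>x\<in>fv_pre qs psi. st ((e(u:=a)) x)" using Cons.prems q by (auto simp: fv_pre_def)
    then show "sat_pre mem st (e(u:=a)) qs psi = sat mem st (e(u:=a)) (erase qs psi)" by (rule Cons.IH)
  qed
  have fvs: "\<forall>y\<in>fv (erase qs psi) - {u}. st (e y)" using Cons.prems q by (auto simp: fv_erase fv_pre_def)
  have inf: "in_form (erase qs psi)" using ip in_form_erase by blast
  show ?case
  proof (cases b)
    case True
    have "(\<forall>a. st a \<longrightarrow> sat mem st (e(u:=a)) (erase qs psi)) \<longrightarrow> (\<forall>a. sat mem st (e(u:=a)) (erase qs psi))"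
      using T fvs inf unfolding Transfer_def by blast
    then show ?thesis using q True IH by auto
  next
    case False
    have "(\<forall>a. st a \<longrightarrow> sat mem st (e(u:=a)) (FNeg (erase qs psi))) \<longrightarrow> (\<forall>a. sat mem st (e(u:=a)) (FNeg (erase qs psi)))"
    proof
      assume h: "\<forall>a. st a \<longrightarrow> sat mem st (e(u:=a)) (FNeg (erase qs psi))"
      have "in_form (FNeg (erase qs psi))" using inf by simp
      moreover have "\<forall>y\<in>fv (FNeg (erase qs psi)) - {u}. st (e y)" using fvs by simp
      ultimately show "\<forall>a. sat mem st (e(u:=a)) (FNeg (erase qs psi))"
        using T h unfolding Transfer_def by blast
    qed
    then show ?thesis using q False IH by auto
  qed
qed

lemma env_upd_Cons: "env_upd e (v#vs) (a#as) = env_upd (e(v:=a)) vs as"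
  by (simp add: env_upd_def)

lemma env_upd_out: "x \<notin> set vs \<Longrightarrow> env_upd e vs vals x = e x"
proof (induction vs arbitrary: e vals)
  case (Cons v vs) then show ?case by (cases vals) (auto simp: env_upd_def)
qed (simp add: env_upd_def)

lemma env_upd_in: "length vals = length vs \<Longrightarrow> x \<in> set vs \<Longrightarrow> env_upd e vs vals x \<in> set vals"
proof (induction vs arbitrary: e vals)
  case (Cons v vs)
  then obtain a as where va: "vals = a # as" by (cases vals) auto
  show ?case
  proof (cases "x \<in> set vs")
    case True then show ?thesis using Cons va by (simp add: env_upd_Cons)
  next
    case False then show ?thesis using Cons va by (simp add: env_upd_Cons env_upd_out)
  qed
qed simp

lemma env_upd_map: "distinct vs \<Longrightarrow> length vals = length vs \<Longrightarrow> map (env_upd e vs vals) vs = vals"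
proof (induction vs arbitrary: e vals)
  case (Cons v vs)
  then obtain a as where va: "vals = a # as" by (cases vals) auto
  then show ?case using Cons by (simp add: env_upd_Cons env_upd_out)
qed simp

lemma env_upd_upd: "z \<notin> set vs \<Longrightarrow> env_upd (e(z:=t)) vs vals = (env_upd e vs vals)(z:=t)"
proof (induction vs arbitrary: e vals)
  case Nil then show ?case by (simp add: env_upd_def)
next
  case (Cons v vs)
  show ?case
  proof (cases vals)
    case Nil then show ?thesis by (simp add: env_upd_def)
  next
    case (Cons a as)
    have "(e(z:=t))(v:=a) = (e(v:=a))(z:=t)" using Cons.prems by (auto intro: fun_upd_twist)
    have "env_upd (e(z:=t)) (v#vs) vals = env_upd ((e(v:=a))(z:=t)) vs as"
      using \<open>vals = a # as\<close> \<open>(e(z:=t))(v:=a) = (e(v:=a))(z:=t)\<close> by (simp add: env_upd_Cons)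
    also have "\<dots> = (env_upd (e(v:=a)) vs as)(z:=t)" by (rule Cons.IH) (use Cons.prems in simp)
    finally show ?thesis using \<open>vals = a # as\<close> by (simp only: env_upd_Cons)
  qed
qed

fun exs where "exs [] f = f" | "exs (v#vs) f = FEx v (exs vs f)"

lemma sat_exs: "sat mem st e (exs vs f) = (\<exists>vals. length vals = length vs \<and> sat mem st (env_upd e vs vals) f)"
proof (induction vs arbitrary: e)
  case Nil show ?case by (simp add: env_upd_def)
next
  case (Cons v vs)
  show ?case
  proof
    assume "sat mem st e (exs (v#vs) f)"
    then obtain a where "sat mem st (e(v:=a)) (exs vs f)" unfolding exs.simps sat.simps by blast
    then obtain vals where "length vals = length vs" "sat mem st (env_upd (e(v:=a)) vs vals) f"
      unfolding Cons.IH by blast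
    then show "\<exists>vals. length vals = length (v#vs) \<and> sat mem st (env_upd e (v#vs) vals) f"
      by (intro exI[of _ "a#vals"]) (simp add: env_upd_Cons)
  next
    assume "\<exists>vals. length vals = length (v#vs) \<and> sat mem st (env_upd e (v#vs) vals) f"
    then obtain vals where h: "length vals = length (v#vs)" "sat mem st (env_upd e (v#vs) vals) f" by blast
    then obtain a as where "vals = a # as" by (cases vals) auto
    then have "sat mem st (env_upd (e(v:=a)) vs as) f" "length as = length vs" using h by (simp_all only: env_upd_Cons, simp)
    then have "sat mem st (e(v:=a)) (exs vs f)" unfolding Cons.IH by blast
    then show "sat mem st e (exs (v#vs) f)" unfolding exs.simps sat.simps by blast
  qed
qed

lemma fv_exs: "fv (exs vs f) = fv f - set vs" by (induction vs) auto
lemma in_form_exs: "in_form (exs vs f) = in_form f" by (induction vs) auto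

definition pairf :: "nat \<Rightarrow> nat \<Rightarrow> nat \<Rightarrow> nat \<Rightarrow> form" where
  "pairf p a b n = FAll n (FIff (FMem n p) (FOr (FAll (Suc n) (FIff (FMem (Suc n) n) (FEq (Suc n) a)))
        (FAll (Suc n) (FIff (FMem (Suc n) n) (FOr (FEq (Suc n) a) (FEq (Suc n) b))))))"

lemma sat_pairf: "p < n \<Longrightarrow> a < n \<Longrightarrow> b < n \<Longrightarrow> sat mem st e (pairf p a b n) = is_pair mem (e p) (e a) (e b)"
  by (simp add: pairf_def is_pair_def)

lemma fv_pairf: "fv (pairf p a b n) \<subseteq> {p,a,b}" by (auto simp: pairf_def)
lemma in_form_pairf: "in_form (pairf p a b n)" by (simp add: pairf_def)

fun tupf :: "nat \<Rightarrow> nat list \<Rightarrow> nat \<Rightarrow> form" where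
  "tupf z [] k = FNeg (FEq z z)"
| "tupf z [v] k = FEq z v"
| "tupf z (v#w#ws) k = FEx k (FAnd (tupf k (w#ws) (Suc k)) (pairf z v k (Suc k)))"

lemma sat_tupf: "z < k \<Longrightarrow> \<forall>v\<in>set vs. v < k \<Longrightarrow> sat mem st e (tupf z vs k) = is_tuple mem (e z) (map e vs)"
proof (induction z vs k arbitrary: e rule: tupf.induct)
  case (3 z v w ws k)
  have m: "map (e(k:=q)) (w#ws) = map e (w#ws)" for q using 3(3) by auto
  have t: "sat mem st (e(k:=q)) (tupf k (w#ws) (Suc k)) = is_tuple mem q (map e (w#ws))" for q
  proof -
    have ih: "sat mem st (e(k:=q)) (tupf k (w#ws) (Suc k)) = is_tuple mem ((e(k:=q)) k) (map (e(k:=q)) (w#ws))"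
      by (rule "3.IH") (use "3.prems" in auto)
    then show ?thesis using m[of q] by (simp only: fun_upd_same)
  qed
  have pp: "sat mem st (e(k:=q)) (pairf z v k (Suc k)) = is_pair mem (e z) (e v) q" for q
    using "3.prems" by (simp add: sat_pairf)
  show ?case using t pp by simp
qed auto

lemma fv_tupf: "fv (tupf z vs k) \<subseteq> insert z (set vs)"
proof (induction z vs k rule: tupf.induct)
  case (3 z v w ws k)
  then show ?case using fv_pairf[of z v k "Suc k"] by auto
qed auto

lemma in_form_tupf: "in_form (tupf z vs k)"
  by (induction z vs k rule: tupf.induct) (auto simp: in_form_pairf)

lemma pair_inj:
  assumes ex: "\<forall>a b. \<exists>c. \<forall>w. mem w c \<longleftrightarrow> w = a \<or> w = b"
    and p1: "is_pair mem p a b" and p2: "is_pair mem p c d"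
  shows "a = c \<and> b = d"
proof -
  obtain z1 where z1: "\<forall>w. mem w z1 \<longleftrightarrow> w = a" using ex by metis
  obtain z2 where z2: "\<forall>w. mem w z2 \<longleftrightarrow> w = a \<or> w = b" using ex by metis
  obtain z3 where z3: "\<forall>w. mem w z3 \<longleftrightarrow> w = c \<or> w = d" using ex by metis
  have i1: "mem z1 p" using p1 z1 unfolding is_pair_def by blast
  have i2: "mem z2 p" using p1 z2 unfolding is_pair_def by blast
  have i3: "mem z3 p" using p2 z3 unfolding is_pair_def by blast
  have ac: "a = c" using p2 i1 z1 unfolding is_pair_def by metis
  have c2: "(\<forall>w. mem w z2 \<longleftrightarrow> w = c) \<or> (\<forall>w. mem w z2 \<longleftrightarrow> w = c \<or> w = d)"
    using p2 i2 unfolding is_pair_def by blast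
  have c3: "(\<forall>w. mem w z3 \<longleftrightarrow> w = a) \<or> (\<forall>w. mem w z3 \<longleftrightarrow> w = a \<or> w = b)"
    using p1 i3 unfolding is_pair_def by blast
  show ?thesis using ac c2 c3 z2 z3 by metis
qed

lemma tuple_inj:
  assumes ex: "\<forall>a b. \<exists>c. \<forall>w. mem w c \<longleftrightarrow> w = a \<or> w = b"
  shows "is_tuple mem t xs \<Longrightarrow> is_tuple mem t ys \<Longrightarrow> length xs = length ys \<Longrightarrow> xs = ys"
proof (induction xs arbitrary: t ys)
  case Nil then show ?case by simp
next
  case (Cons a xs)
  show ?case
  proof (cases xs)
    case Nil then show ?thesis using Cons.prems by (cases ys) auto
  next
    case (Cons b cs)
    then obtain a' b' cs' where ys: "ys = a' # b' # cs'" using Cons.prems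
      by (metis Suc_length_conv length_Cons)
    obtain q where q: "is_tuple mem q (b # cs)" "is_pair mem t a q" using Cons.prems(1) \<open>xs = b # cs\<close> by auto
    obtain q' where q': "is_tuple mem q' (b' # cs')" "is_pair mem t a' q'" using Cons.prems(2) ys by auto
    have "a = a' \<and> q = q'" using pair_inj[OF ex q(2) q'(2)] .
    then have "is_tuple mem q (b' # cs')" using q' by simp
    moreover have "length (b # cs) = length (b' # cs')" using Cons.prems(3) ys \<open>xs = b # cs\<close> by simp
    ultimately have "b # cs = b' # cs'" using Cons.IH q(1) \<open>xs = b # cs\<close> by blast
    then show ?thesis using ys \<open>a = a' \<and> q = q'\<close> \<open>xs = b # cs\<close> by simp
  qed
qed

lemma ZF_sep: "ZF mem \<Longrightarrow> in_form phi \<Longrightarrow>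
   \<exists>b. \<forall>z. mem z b \<longleftrightarrow> mem z a \<and> sat mem st (e(x := z)) phi"
proof -
  assume Z: "ZF mem" and i: "in_form phi"
  have "\<exists>b. \<forall>z. mem z b \<longleftrightarrow> mem z a \<and> sat mem (\<lambda>_. False) (e(x := z)) phi"
    using Z i unfolding ZF_def by blast
  then show ?thesis using sat_st[OF i, of mem "\<lambda>_. False"] by metis
qed

lemma pair_ex: "ZF mem \<Longrightarrow> \<forall>a b. \<exists>c. \<forall>w. mem w c \<longleftrightarrow> w = a \<or> w = b"
proof (intro allI)
  fix a b assume Z: "ZF mem"
  have "\<forall>a b. \<exists>c. mem a c \<and> mem b c" using Z unfolding ZF_def by (elim conjE) assumption
  then obtain c where c: "mem a c" "mem b c" by blast
  obtain d where d: "\<forall>z. mem z d \<longleftrightarrow> mem z c \<and> sat mem (\<lambda>_. False) (((\<lambda>_. a)(1:=a, 2:=b))(0 := z)) (FOr (FEq 0 1) (FEq 0 2))"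
    using ZF_sep[OF Z, of "FOr (FEq 0 1) (FEq 0 2)" c "\<lambda>_. False" "(\<lambda>_. a)(1:=a, 2:=b)" 0] by (simp; blast)
  show "\<exists>c. \<forall>w. mem w c \<longleftrightarrow> w = a \<or> w = b"
    by (rule exI[of _ d]) (use d c in auto)
qed

theorem lemma2p8:
  fixes mem :: "'a \<Rightarrow> 'a \<Rightarrow> bool" and st :: "'a \<Rightarrow> bool"
    and qs :: "(bool \<times> nat) list" and psi :: form and vs :: "nat list"
    and e :: "nat \<Rightarrow> 'a" and S :: 'a
  assumes "SPOT mem st"
    and "in_form psi"
    and "vs \<noteq> []" and "distinct vs"
    and "\<forall>x \<in> fv_pre qs psi - set vs. st (e x)"
    and "st S"
  shows "\<exists>P. st P \<and>
    (\<forall>vals. length vals = length vs \<longrightarrow> (\<forall>a\<in>set vals. st a) \<longrightarrow>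
      ((\<exists>t. is_tuple mem t vals \<and> mem t P) \<longleftrightarrow>
       ((\<exists>t. is_tuple mem t vals \<and> mem t S) \<and> sat_pre mem st (env_upd e vs vals) qs psi)))"
proof -
  have Z: "ZF mem" and T: "Transfer mem st" using assms(1) unfolding SPOT_def by auto
  have pe: "\<forall>a b. \<exists>c. \<forall>w. mem w c \<longleftrightarrow> w = a \<or> w = b" using pair_ex[OF Z] .
  define th where "th = erase qs psi"
  have inth: "in_form th" unfolding th_def using in_form_erase assms(2) by blast
  have fvth: "fv th = fv_pre qs psi" unfolding th_def by (rule fv_erase)
  define N where "N = Suc (Max (fv th \<union> set vs))"
  have fin: "finite (fv th \<union> set vs)" using finite_fv by simp
  have big: "x < N" if "x \<in> fv th \<union> set vs" for x
    using Max_ge[OF fin that] unfolding N_def by simp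
  define z where "z = N"
  define s where "s = Suc N"
  define p where "p = Suc (Suc N)"
  define k where "k = Suc (Suc (Suc N))"
  define phi where "phi = exs vs (FAnd (tupf z vs k) th)"
  have zvs: "z \<notin> set vs" using big z_def by fastforce
  have zth: "z \<notin> fv th" using big z_def by fastforce
  have pth: "p \<notin> fv th" using big p_def by fastforce
  have sth: "s \<notin> fv th" using big s_def by fastforce
  have inphi: "in_form phi" unfolding phi_def using inth in_form_tupf in_form_exs by simp
  have fvphi: "fv phi \<subseteq> insert z (fv th - set vs)"
    unfolding phi_def fv_exs using fv_tupf[of z vs k] by auto
  have key: "sat mem st (e(z:=t)) phi \<longleftrightarrow> (\<exists>vals. length vals = length vs \<and> is_tuple mem t vals \<and> sat mem st (env_upd e vs vals) th)" for t
  proof -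
    have "sat mem st (e(z:=t)) phi \<longleftrightarrow> (\<exists>vals. length vals = length vs \<and> sat mem st ((env_upd e vs vals)(z:=t)) (tupf z vs k) \<and> sat mem st ((env_upd e vs vals)(z:=t)) th)"
      unfolding phi_def sat_exs env_upd_upd[OF zvs] by simp
    also have "\<dots> \<longleftrightarrow> (\<exists>vals. length vals = length vs \<and> is_tuple mem t vals \<and> sat mem st (env_upd e vs vals) th)"
    proof -
      have A: "sat mem st ((env_upd e vs vals)(z:=t)) (tupf z vs k) = is_tuple mem t vals" if "length vals = length vs" for vals
      proof -
        have "\<forall>v\<in>set vs. v < k" using big k_def by fastforce
        moreover have "z < k" unfolding z_def k_def by simp
        ultimately have "sat mem st ((env_upd e vs vals)(z:=t)) (tupf z vs k) = is_tuple mem (((env_upd e vs vals)(z:=t)) z) (map ((env_upd e vs vals)(z:=t)) vs)"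
          by - (rule sat_tupf[OF \<open>z < k\<close> \<open>\<forall>v\<in>set vs. v < k\<close>])
        also have "map ((env_upd e vs vals)(z:=t)) vs = map (env_upd e vs vals) vs" using zvs by auto
        also have "\<dots> = vals" using env_upd_map[OF assms(4) that] .
        finally show ?thesis by (simp only: fun_upd_same)
      qed
      have B: "sat mem st ((env_upd e vs vals)(z:=t)) th = sat mem st (env_upd e vs vals) th" for vals
        by (rule sat_cong) (use zth in auto)
      show ?thesis using A B by blast
    qed
    finally show ?thesis .
  qed
  define chi where "chi = FAll z (FIff (FMem z p) (FAnd (FMem z s) phi))"
  have pfv: "p \<notin> fv phi" "s \<notin> fv phi" using fvphi pth sth unfolding p_def s_def z_def by auto
  have inchi: "in_form chi" using inphi by (simp add: chi_def)
  have chi_sem: "sat mem st ((e(s:=S))(p:=b)) chi \<longleftrightarrow> (\<forall>t. mem t b \<longleftrightarrow> mem t S \<and> sat mem st (e(z:=t)) phi)" for b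
  proof -
    have "sat mem st ((e(s:=S))(p:=b,z:=t)) phi = sat mem st (e(z:=t)) phi" for t
      by (rule sat_cong) (use pfv in auto)
    moreover have "z \<noteq> p" "z \<noteq> s" "s \<noteq> p" unfolding z_def p_def s_def by auto
    ultimately show ?thesis unfolding chi_def by simp
  qed
  obtain b0 where "\<forall>t. mem t b0 \<longleftrightarrow> mem t S \<and> sat mem st (e(z:=t)) phi"
    using ZF_sep[OF Z inphi] by blast
  then have b0: "sat mem st ((e(s:=S))(p:=b0)) chi" using chi_sem by blast
  obtain P where stP: "st P" and P: "sat mem st ((e(s:=S))(p:=P)) chi"
  proof -
    have fvc: "\<forall>y\<in>fv (FNeg chi) - {p}. st ((e(s:=S)) y)"
    proof
      fix y assume y: "y \<in> fv (FNeg chi) - {p}"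
      show "st ((e(s:=S)) y)"
      proof (cases "y = s")
        case True then show ?thesis using assms(6) by simp
      next
        case False
        then have "y \<in> fv phi - {z}" using y unfolding chi_def by auto
        then have "y \<in> fv_pre qs psi - set vs" using fvphi fvth by auto
        then show ?thesis using assms(5) False by simp
      qed
    qed
    have inc: "in_form (FNeg chi)" using inchi by simp
    have "\<not>(\<forall>a. st a \<longrightarrow> sat mem st ((e(s:=S))(p:=a)) (FNeg chi))"
    proof
      assume h: "\<forall>a. st a \<longrightarrow> sat mem st ((e(s:=S))(p:=a)) (FNeg chi)"
      have "\<forall>a. sat mem st ((e(s:=S))(p:=a)) (FNeg chi)"
        using T inc fvc h unfolding Transfer_def by blast
      then show False using b0 by simp
    qed
    then show ?thesis using that by auto
  qed
  have Pm: "\<forall>t. mem t P \<longleftrightarrow> mem t S \<and> sat mem st (e(z:=t)) phi" using P chi_sem by blast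
  show ?thesis
  proof (intro exI[of _ P] conjI stP allI impI)
    fix vals assume len: "length vals = length vs" and stv: "\<forall>a\<in>set vals. st a"
    have sp: "sat_pre mem st (env_upd e vs vals) qs psi = sat mem st (env_upd e vs vals) th"
      unfolding th_def
    proof (rule erase_sat[OF T assms(2)])
      show "\<forall>x\<in>fv_pre qs psi. st (env_upd e vs vals x)"
      proof
        fix x assume x: "x \<in> fv_pre qs psi"
        show "st (env_upd e vs vals x)"
        proof (cases "x \<in> set vs")
          case True then show ?thesis using env_upd_in[OF len True] stv by blast
        next
          case False
          then have "st (e x)" using assms(5) x by blast
          then show ?thesis using env_upd_out[OF False, of e vals] by simp
        qed
      qed
    qed
    show "(\<exists>t. is_tuple mem t vals \<and> mem t P) \<longleftrightarrow>
       ((\<exists>t. is_tuple mem t vals \<and> mem t S) \<and> sat_pre mem st (env_upd e vs vals) qs psi)"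
    proof
      assume "\<exists>t. is_tuple mem t vals \<and> mem t P"
      then obtain t vals' where t: "is_tuple mem t vals" "mem t S" "length vals' = length vs"
        "is_tuple mem t vals'" "sat mem st (env_upd e vs vals') th"
        using Pm key by blast
      have "vals' = vals" using tuple_inj[OF pe t(4) t(1)] t(3) len by simp
      then show "(\<exists>t. is_tuple mem t vals \<and> mem t S) \<and> sat_pre mem st (env_upd e vs vals) qs psi"
        using t sp by blast
    next
      assume "(\<exists>t. is_tuple mem t vals \<and> mem t S) \<and> sat_pre mem st (env_upd e vs vals) qs psi"
      then obtain t where t: "is_tuple mem t vals" "mem t S" "sat mem st (env_upd e vs vals) th"
        using sp by blast
      then have "mem t P" using Pm key len by blast
      then show "\<exists>t. is_tuple mem t vals \<and> mem t P" using t by blast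
    qed
  qed
qed

end
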